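(* Let $\phi=\frac{1+\sqrt5}{2}$, let $\Gamma\subset SL_2(\mathbb R)$ be the group generated by $$\sigma_0=\begin{pmatrix}1&\phi\\0&1\end{pmatrix},\quad \sigma_1=\begin{pmatrix}\phi&\phi\\1&\phi\end{pmatrix},\quad \sigma_2=\begin{pmatrix}\phi&1\\\phi&\phi\end{pmatrix},\quad \sigma_3=\begin{pmatrix}1&0\\\phi&1\end{pmatrix},$$ and let $S=\{\gamma\binom{1}{0}:\gamma\in\Gamma\}$. Let $v_1,v_2\in S$ be distinct, write $v_1-v_2=\binom{x}{y}$, and let $\lambda=\gcd_{\Gamma^+}(x,y)$. Then there are two points of $S$ lying on a common horizontal line at distance exactly $\lambda$ from each other.
   Context: $S\subset\mathbb Z[\phi]^2$. For $x,y\in\mathbb Z[\phi]$ not both zero, $\gcd_{\Gamma^+}(x,y)$ denotes the positive real number $\lambda$ such that $\lambda^{-1}\binom{|x|}{|y|}\in S$ (it is known, from the Davis–Lelièvre gcd algorithm for $\mathbb Z[\phi]$, that such $\lambda$ exists and is unique; it is the representative of the gcd of $|x|,|y|$ produced by that algorithm). $\Gamma$ acts on $\mathbb R^2$ by matrix multiplication on column vectors. *)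

theory Defs
  imports "HOL-Analysis.Analysis"
begin

definition phi :: real where "phi = (1 + sqrt 5) / 2"

definition sigma0 :: "real^2^2" where "sigma0 = vector [vector [1, phi], vector [0, 1]]"
definition sigma1 :: "real^2^2" where "sigma1 = vector [vector [phi, phi], vector [1, phi]]"
definition sigma2 :: "real^2^2" where "sigma2 = vector [vector [phi, 1], vector [phi, phi]]"
definition sigma3 :: "real^2^2" where "sigma3 = vector [vector [1, 0], vector [phi, 1]]"

definition gens :: "(real^2^2) set" where "gens = {sigma0, sigma1, sigma2, sigma3}"

inductive_set Gamma :: "(real^2^2) set" where
  id: "mat 1 \<in> Gamma"
| mul: "g \<in> gens \<Longrightarrow> h \<in> Gamma \<Longrightarrow> g ** h \<in> Gamma"
| mul_inv: "g \<in> gens \<Longrightarrow> h \<in> Gamma \<Longrightarrow> matrix_inv g ** h \<in> Gamma"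

definition S :: "(real^2) set" where "S = {\<gamma> *v vector [1, 0] | \<gamma>. \<gamma> \<in> Gamma}"

definition gcd_Gamma_plus :: "real \<Rightarrow> real \<Rightarrow> real" where
  "gcd_Gamma_plus x y = (THE l. l > 0 \<and> vector [\<bar>x\<bar> / l, \<bar>y\<bar> / l] \<in> S)"

end

theory Submission
  imports Defs
begin


definition psi :: real where "psi = (1 - sqrt 5) / 2"

lemma phi_sq: "phi * phi = phi + 1"
  unfolding phi_def by (simp add: field_simps) 
lemma psi_sq: "psi * psi = psi + 1"
  unfolding psi_def by (simp add: field_simps)
lemma psi_eq: "psi = 1 - phi" unfolding psi_def phi_def by (simp add: field_simps)
lemma phi_gt1: "phi > 1" unfolding phi_def
proof -
  have "sqrt 5 > 1" by simp
  then show "(1 + sqrt 5) / 2 > 1" by simp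
qed
lemma phi_lt2: "phi < 2" unfolding phi_def
proof -
  have "sqrt 5 < 3" by (rule real_less_lsqrt) auto
  then show "(1 + sqrt 5) / 2 < 2" by simp
qed
lemma phi_psi: "phi * psi = -1" unfolding phi_def psi_def by (simp add: field_simps)

lemma sq5_dvd: "(a::int)^2 mod 5 = 0 \<Longrightarrow> a mod 5 = 0"
proof -
  assume h: "a^2 mod 5 = 0"
  have "a^2 mod 5 = (a mod 5)^2 mod 5" by (simp add: power_mod)
  moreover have "a mod 5 \<in> {0,1,2,3,4}" by auto
  ultimately show ?thesis using h by auto
qed

lemma sq5_aux: "\<forall>(a::int) (n::int). nat \<bar>n\<bar> = k \<longrightarrow> a^2 = 5 * n^2 \<longrightarrow> n = 0"
proof (induction k rule: less_induct)
  case (less k)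
  show ?case
  proof (intro allI impI)
    fix a n :: int assume k: "nat \<bar>n\<bar> = k" and e: "a^2 = 5 * n^2"
    show "n = 0"
    proof (rule ccontr)
      assume n0: "n \<noteq> 0"
      have "a^2 mod 5 = 0" using e by simp
      then have "a mod 5 = 0" by (rule sq5_dvd)
      then obtain b where b: "a = 5 * b" by (metis mult.commute mod_eq_0_iff_dvd dvd_def)
      have e2: "n^2 = 5 * b^2" using e b by (simp add: power2_eq_square)
      then have "n^2 mod 5 = 0" by simp
      then have "n mod 5 = 0" by (rule sq5_dvd)
      then obtain c where c: "n = 5 * c" by (metis mult.commute mod_eq_0_iff_dvd dvd_def)
      have e3: "b^2 = 5 * c^2" using e2 c by (simp add: power2_eq_square)
      have "nat \<bar>c\<bar> < k" using k c n0 by auto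
      then have "c = 0" using less.IH e3 by blast
      then show False using c n0 by simp
    qed
  qed
qed

lemma psi_indep: "real_of_int m + real_of_int n * psi = 0 \<Longrightarrow> m = 0 \<and> n = 0"
proof -
  assume h: "real_of_int m + real_of_int n * psi = 0"
  then have "2 * real_of_int m + real_of_int n = real_of_int n * sqrt 5"
    unfolding psi_def by (simp add: field_simps)
  then have "(2 * real_of_int m + real_of_int n)^2 = (real_of_int n)^2 * 5"
    by (simp add: power_mult_distrib)
  then have "real_of_int ((2*m+n)^2) = real_of_int (5 * n^2)" by simp
  then have "(2*m+n)^2 = 5 * n^2" by (simp only: of_int_eq_iff)
  then have "n = 0" using sq5_aux by blast
  then show ?thesis using h by simp
qed


type_synonym zp = "int \<times> int"

fun vl :: "zp \<Rightarrow> real" where "vl (m,n) = of_int m + of_int n * phi"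
fun cv :: "zp \<Rightarrow> real" where "cv (m,n) = of_int m + of_int n * psi"
fun zsub :: "zp \<Rightarrow> zp \<Rightarrow> zp" where "zsub (a,b) (c,d) = (a - c, b - d)"
fun zphi :: "zp \<Rightarrow> zp" where "zphi (m,n) = (n, m + n)"
fun zmul :: "zp \<Rightarrow> zp \<Rightarrow> zp" where "zmul (a,b) (c,d) = (a*c + b*d, a*d + b*c + b*d)"
fun cj :: "zp \<Rightarrow> zp" where "cj (m,n) = (m + n, -n)"
fun zneg :: "zp \<Rightarrow> zp" where "zneg (m,n) = (-m, -n)"

lemma vl_zsub: "vl (zsub p q) = vl p - vl q" by (cases p; cases q) (simp add: algebra_simps)
lemma cv_zsub: "cv (zsub p q) = cv p - cv q" by (cases p; cases q) (simp add: algebra_simps)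
lemma vl_zneg: "vl (zneg p) = - vl p" by (cases p) (simp add: algebra_simps)
lemma cv_zneg: "cv (zneg p) = - cv p" by (cases p) (simp add: algebra_simps)
lemma vl_zmul: "vl (zmul p q) = vl p * vl q"
proof (cases p; cases q)
  fix a b c d assume "p = (a,b)" "q = (c,d)"
  moreover have "of_int (a*c + b*d) + of_int (a*d + b*c + b*d) * phi
     = (of_int a + of_int b * phi) * (of_int c + of_int d * phi)"
  proof -
    have "(of_int a + of_int b * phi) * (of_int c + of_int d * phi)
       = of_int a * of_int c + (of_int a * of_int d + of_int b * of_int c) * phi + of_int b * of_int d * (phi * phi)"
      by (simp add: algebra_simps)
    also have "\<dots> = of_int (a*c + b*d) + of_int (a*d + b*c + b*d) * phi"
      unfolding phi_sq by (simp add: algebra_simps)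
    finally show ?thesis by simp
  qed
  ultimately show ?thesis by simp
qed
lemma cv_zmul: "cv (zmul p q) = cv p * cv q"
proof (cases p; cases q)
  fix a b c d assume "p = (a,b)" "q = (c,d)"
  moreover have "of_int (a*c + b*d) + of_int (a*d + b*c + b*d) * psi
     = (of_int a + of_int b * psi) * (of_int c + of_int d * psi)"
  proof -
    have "(of_int a + of_int b * psi) * (of_int c + of_int d * psi)
       = of_int a * of_int c + (of_int a * of_int d + of_int b * of_int c) * psi + of_int b * of_int d * (psi * psi)"
      by (simp add: algebra_simps)
    also have "\<dots> = of_int (a*c + b*d) + of_int (a*d + b*c + b*d) * psi"
      unfolding psi_sq by (simp add: algebra_simps)
    finally show ?thesis by simp
  qed
  ultimately show ?thesis by simp
qed
lemma zphi_zmul: "zphi p = zmul (0,1) p" by (cases p) simp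
lemma vl_zphi: "vl (zphi p) = phi * vl p" unfolding zphi_zmul vl_zmul by simp
lemma cv_zphi: "cv (zphi p) = psi * cv p" unfolding zphi_zmul cv_zmul by simp
lemma vl_cj: "vl (cj q) = cv q" by (cases q) (simp add: psi_eq algebra_simps)
lemma cv_cj: "cv (cj q) = vl q" by (cases q) (simp add: psi_eq algebra_simps)

lemma cv_nz: "vl p \<noteq> 0 \<Longrightarrow> cv p \<noteq> 0"
proof (cases p)
  case (Pair m n)
  assume "vl p \<noteq> 0"
  show ?thesis
  proof
    assume "cv p = 0"
    then have "m = 0 \<and> n = 0" using Pair psi_indep by simp
    then show False using \<open>vl p \<noteq> 0\<close> Pair by simp
  qed
qed

definition Hf :: "zp \<Rightarrow> zp \<Rightarrow> real" where
  "Hf p q = \<bar>vl p * cv q\<bar> + \<bar>cv p * vl q\<bar>"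

definition Bset :: "real \<Rightarrow> zp set" where
  "Bset h = {z. \<bar>vl z\<bar> + \<bar>cv z\<bar> < h}"

lemma phi_minus_psi: "phi - psi = sqrt 5" unfolding phi_def psi_def by (simp add: field_simps)

lemma Bset_finite: "finite (Bset h)"
proof -
  define K where "K = \<lceil>h\<rceil>"
  have "Bset h \<subseteq> {-K..K} \<times> {-K..K}"
  proof
    fix z assume "z \<in> Bset h"
    obtain m n where z: "z = (m,n)" by (cases z)
    have hz: "\<bar>vl z\<bar> + \<bar>cv z\<bar> < h" using \<open>z \<in> Bset h\<close> unfolding Bset_def by simp
    have s5: "sqrt 5 \<ge> 1" by simp
    have "\<bar>vl z - cv z\<bar> < h" using hz by linarith
    moreover have "vl z - cv z = of_int n * (phi - psi)" using z by (simp add: algebra_simps)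
    then have "vl z - cv z = of_int n * sqrt 5" using phi_minus_psi by simp
    ultimately have "\<bar>of_int n\<bar> * sqrt 5 < h" by (simp add: abs_mult)
    moreover have "\<bar>of_int n\<bar> \<le> \<bar>of_int n\<bar> * sqrt 5" using mult_left_mono[OF s5, of "\<bar>of_int n\<bar>"] by simp
    ultimately have nh: "\<bar>real_of_int n\<bar> < h" by linarith
    have "\<bar>vl z + cv z\<bar> < h" using hz by linarith
    moreover have "vl z + cv z = 2 * of_int m + of_int n * (phi + psi)" using z by (simp add: algebra_simps)
    then have "vl z + cv z = 2 * of_int m + of_int n" using psi_eq by simp
    ultimately have "\<bar>2 * real_of_int m + of_int n\<bar> < h" by simp
    then have mh: "\<bar>real_of_int m\<bar> < h" using nh by linarith
    have "of_int \<bar>n\<bar> \<le> h" "of_int \<bar>m\<bar> \<le> h" using nh mh by auto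
    then have "\<bar>n\<bar> \<le> K" "\<bar>m\<bar> \<le> K" unfolding K_def by (simp_all add: le_ceiling_iff)
    then show "z \<in> {-K..K} \<times> {-K..K}" using z by auto
  qed
  then show ?thesis by (rule finite_subset) auto
qed

definition mu :: "zp \<Rightarrow> zp \<Rightarrow> nat" where "mu p q = card (Bset (Hf p q))"

lemma Hf_witness: "\<bar>vl (zmul p (cj q))\<bar> + \<bar>cv (zmul p (cj q))\<bar> = Hf p q"
  unfolding Hf_def vl_zmul cv_zmul vl_cj cv_cj by simp

lemma mu_less: "Hf p2 q2 < Hf p q \<Longrightarrow> mu p2 q2 < mu p q"
proof -
  assume h: "Hf p2 q2 < Hf p q"
  have sub: "Bset (Hf p2 q2) \<subseteq> Bset (Hf p q)" using h unfolding Bset_def by auto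
  have "zmul p2 (cj q2) \<in> Bset (Hf p q)" using h Hf_witness[of p2 q2] unfolding Bset_def by simp
  moreover have "zmul p2 (cj q2) \<notin> Bset (Hf p2 q2)" using Hf_witness[of p2 q2] unfolding Bset_def by simp
  ultimately have "Bset (Hf p2 q2) \<subset> Bset (Hf p q)" using sub by blast
  then show ?thesis unfolding mu_def by (rule psubset_card_mono[OF Bset_finite])
qed

lemma Hf_swap: "Hf q p = Hf p q" unfolding Hf_def by (simp add: mult.commute add.commute)



type_synonym rp = "real \<times> real"

fun s0 :: "rp \<Rightarrow> rp" where "s0 (x,y) = (x + phi*y, y)"
fun s1 :: "rp \<Rightarrow> rp" where "s1 (x,y) = (phi*x + phi*y, x + phi*y)"
fun s2 :: "rp \<Rightarrow> rp" where "s2 (x,y) = (phi*x + y, phi*x + phi*y)"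
fun s3 :: "rp \<Rightarrow> rp" where "s3 (x,y) = (x, phi*x + y)"
fun i0 :: "rp \<Rightarrow> rp" where "i0 (x,y) = (x - phi*y, y)"
fun i1 :: "rp \<Rightarrow> rp" where "i1 (x,y) = (phi*x - phi*y, -x + phi*y)"
fun i2 :: "rp \<Rightarrow> rp" where "i2 (x,y) = (phi*x - y, -phi*x + phi*y)"
fun i3 :: "rp \<Rightarrow> rp" where "i3 (x,y) = (x, y - phi*x)"
fun sw :: "rp \<Rightarrow> rp" where "sw (x,y) = (y,x)"
fun fx :: "rp \<Rightarrow> rp" where "fx (x,y) = (-x,y)"
fun fy :: "rp \<Rightarrow> rp" where "fy (x,y) = (x,-y)"
fun sc :: "real \<Rightarrow> rp \<Rightarrow> rp" where "sc l (x,y) = (l*x, l*y)"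

inductive_set M :: "rp set" where
  e1: "(1,0) \<in> M"
| e2: "(0,1) \<in> M"
| m0: "w \<in> M \<Longrightarrow> s0 w \<in> M"
| m1: "w \<in> M \<Longrightarrow> s1 w \<in> M"
| m2: "w \<in> M \<Longrightarrow> s2 w \<in> M"
| m3: "w \<in> M \<Longrightarrow> s3 w \<in> M"

lemma sw_s0: "sw (s0 w) = s3 (sw w)" by (cases w) simp
lemma sw_s1: "sw (s1 w) = s2 (sw w)" by (cases w) (simp add: add.commute)
lemma sw_s2: "sw (s2 w) = s1 (sw w)" by (cases w) (simp add: add.commute)
lemma sw_s3: "sw (s3 w) = s0 (sw w)" by (cases w) simp

lemma M_sw: "w \<in> M \<Longrightarrow> sw w \<in> M"
  by (induction rule: M.induct) (auto simp: sw_s0 sw_s1 sw_s2 sw_s3 intro: M.intros)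

lemma M_props: "w \<in> M \<Longrightarrow> fst w \<ge> 0 \<and> snd w \<ge> 0 \<and> (snd w = 0 \<longrightarrow> fst w = 1) \<and> (fst w = 0 \<longrightarrow> snd w = 1)"
proof (induction rule: M.induct)
  case e1 then show ?case by simp
next
  case e2 then show ?case by simp
next
  case (m0 w)
  obtain x y where w: "w = (x,y)" by (cases w)
  have h: "x \<ge> 0" "y \<ge> 0" "y = 0 \<longrightarrow> x = 1" "x = 0 \<longrightarrow> y = 1" using m0 w by auto
  have "phi * x \<ge> x" "phi * y \<ge> y" using mult_right_mono[OF less_imp_le[OF phi_gt1] h(1)]
     mult_right_mono[OF less_imp_le[OF phi_gt1] h(2)] by auto
  then show ?case using h w by (simp; (intro conjI impI; linarith)?)
next
  case (m1 w)
  obtain x y where w: "w = (x,y)" by (cases w)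
  have h: "x \<ge> 0" "y \<ge> 0" "y = 0 \<longrightarrow> x = 1" "x = 0 \<longrightarrow> y = 1" using m1 w by auto
  have "phi * x \<ge> x" "phi * y \<ge> y" using mult_right_mono[OF less_imp_le[OF phi_gt1] h(1)]
     mult_right_mono[OF less_imp_le[OF phi_gt1] h(2)] by auto
  then show ?case using h w by (simp; (intro conjI impI; linarith)?)
next
  case (m2 w)
  obtain x y where w: "w = (x,y)" by (cases w)
  have h: "x \<ge> 0" "y \<ge> 0" "y = 0 \<longrightarrow> x = 1" "x = 0 \<longrightarrow> y = 1" using m2 w by auto
  have "phi * x \<ge> x" "phi * y \<ge> y" using mult_right_mono[OF less_imp_le[OF phi_gt1] h(1)]
     mult_right_mono[OF less_imp_le[OF phi_gt1] h(2)] by auto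
  then show ?case using h w by (simp; (intro conjI impI; linarith)?)
next
  case (m3 w)
  obtain x y where w: "w = (x,y)" by (cases w)
  have h: "x \<ge> 0" "y \<ge> 0" "y = 0 \<longrightarrow> x = 1" "x = 0 \<longrightarrow> y = 1" using m3 w by auto
  have "phi * x \<ge> x" "phi * y \<ge> y" using mult_right_mono[OF less_imp_le[OF phi_gt1] h(1)]
     mult_right_mono[OF less_imp_le[OF phi_gt1] h(2)] by auto
  then show ?case using h w by (simp; (intro conjI impI; linarith)?)
qed

definition Sstar :: "rp set" where
  "Sstar = {(a*x, b*y) | a b x y. (x,y) \<in> M \<and> (a = 1 \<or> a = -1) \<and> (b = 1 \<or> b = -1)}"

lemma M_Sstar: "w \<in> M \<Longrightarrow> w \<in> Sstar"
  unfolding Sstar_def by (cases w) force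
lemma fx_Sstar: "w \<in> M \<Longrightarrow> fx w \<in> Sstar"
  unfolding Sstar_def by (cases w) force
lemma fy_Sstar: "w \<in> M \<Longrightarrow> fy w \<in> Sstar"
  unfolding Sstar_def by (cases w) force

lemma phi2: "phi * phi * y = phi * y + y" using phi_sq by (metis distrib_right mult_1)

lemma i0_M: assumes "w \<in> M" shows "i0 w \<in> Sstar"
  using assms
proof (cases rule: M.cases)
  case e1 then show ?thesis using M_Sstar M.e1 by simp
next
  case e2 then have "i0 w = fx (s0 (0,1))" by simp
  moreover have "fx (s0 (0,1)) \<in> Sstar" by (rule fx_Sstar) (rule M.intros)+
  ultimately show ?thesis by simp
next
  case (m0 u) then show ?thesis using M_Sstar by (cases u) simp
next
  case (m1 u) then have "i0 w = fx (sw (s0 u))" by (cases u) (simp add: algebra_simps phi_sq)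
  moreover have "fx (sw (s0 u)) \<in> Sstar" using m1 by (intro fx_Sstar M_sw M.intros)
  ultimately show ?thesis by simp
next
  case (m2 u) then have "i0 w = fx (s2 (sw u))" by (cases u) (simp add: algebra_simps phi_sq)
  moreover have "fx (s2 (sw u)) \<in> Sstar" using m2 by (intro fx_Sstar M_sw M.intros)
  ultimately show ?thesis by simp
next
  case (m3 u) then have "i0 w = fx (s1 (sw u))" by (cases u) (simp add: algebra_simps phi_sq)
  moreover have "fx (s1 (sw u)) \<in> Sstar" using m3 by (intro fx_Sstar M_sw M.intros)
  ultimately show ?thesis by simp
qed

lemma i1_M: assumes "w \<in> M" shows "i1 w \<in> Sstar"
  using assms
proof (cases rule: M.cases)
  case e1 then have "i1 w = fy (s0 (0,1))" by simp
  moreover have "fy (s0 (0,1)) \<in> Sstar" by (rule fy_Sstar) (intro M_sw M.intros)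
  ultimately show ?thesis by simp
next
  case e2 then have "i1 w = fx (s1 (0,1))" by simp
  moreover have "fx (s1 (0,1)) \<in> Sstar" by (rule fx_Sstar) (intro M_sw M.intros)
  ultimately show ?thesis by simp
next
  case (m0 u) then have "i1 w = fy (s0 (sw u))" by (cases u) (simp add: algebra_simps phi_sq)
  moreover have "fy (s0 (sw u)) \<in> Sstar" using m0 by (intro fy_Sstar M_sw M.intros)
  ultimately show ?thesis by simp
next
  case (m1 u) then show ?thesis using M_Sstar by (cases u) (simp add: algebra_simps phi_sq)
next
  case (m2 u) then have "i1 w = fx (sw (s0 u))" by (cases u) (simp add: algebra_simps phi_sq)
  moreover have "fx (sw (s0 u)) \<in> Sstar" using m2 by (intro fx_Sstar M_sw M.intros)
  ultimately show ?thesis by simp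
next
  case (m3 u) then have "i1 w = fx (s2 (sw u))" by (cases u) (simp add: algebra_simps phi_sq)
  moreover have "fx (s2 (sw u)) \<in> Sstar" using m3 by (intro fx_Sstar M_sw M.intros)
  ultimately show ?thesis by simp
qed

lemma i2_M: assumes "w \<in> M" shows "i2 w \<in> Sstar"
  using assms
proof (cases rule: M.cases)
  case e1 then have "i2 w = fy (s1 (0,1))" by simp
  moreover have "fy (s1 (0,1)) \<in> Sstar" by (rule fy_Sstar) (intro M_sw M.intros)
  ultimately show ?thesis by simp
next
  case e2 then have "i2 w = fx (sw (s0 (0,1)))" by simp
  moreover have "fx (sw (s0 (0,1))) \<in> Sstar" by (rule fx_Sstar) (intro M_sw M.intros)
  ultimately show ?thesis by simp
next
  case (m0 u) then have "i2 w = fy (sw (s2 u))" by (cases u) (simp add: algebra_simps phi_sq)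
  moreover have "fy (sw (s2 u)) \<in> Sstar" using m0 by (intro fy_Sstar M_sw M.intros)
  ultimately show ?thesis by simp
next
  case (m1 u) then have "i2 w = fy (s0 (sw u))" by (cases u) (simp add: algebra_simps phi_sq)
  moreover have "fy (s0 (sw u)) \<in> Sstar" using m1 by (intro fy_Sstar M_sw M.intros)
  ultimately show ?thesis by simp
next
  case (m2 u) then show ?thesis using M_Sstar by (cases u) (simp add: algebra_simps phi_sq)
next
  case (m3 u) then have "i2 w = fx (sw (s0 u))" by (cases u) (simp add: algebra_simps phi_sq)
  moreover have "fx (sw (s0 u)) \<in> Sstar" using m3 by (intro fx_Sstar M_sw M.intros)
  ultimately show ?thesis by simp
qed

lemma i3_M: assumes "w \<in> M" shows "i3 w \<in> Sstar"
  using assms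
proof (cases rule: M.cases)
  case e1 then have "i3 w = fy (s3 (1,0))" by simp
  moreover have "fy (s3 (1,0)) \<in> Sstar" by (rule fy_Sstar) (intro M_sw M.intros)
  ultimately show ?thesis by simp
next
  case e2 then show ?thesis using M_Sstar M.e2 by simp
next
  case (m0 u) then have "i3 w = fy (sw (s1 u))" by (cases u) (simp add: algebra_simps phi_sq)
  moreover have "fy (sw (s1 u)) \<in> Sstar" using m0 by (intro fy_Sstar M_sw M.intros)
  ultimately show ?thesis by simp
next
  case (m1 u) then have "i3 w = fy (sw (s2 u))" by (cases u) (simp add: algebra_simps phi_sq)
  moreover have "fy (sw (s2 u)) \<in> Sstar" using m1 by (intro fy_Sstar M_sw M.intros)
  ultimately show ?thesis by simp
next
  case (m2 u) then have "i3 w = fy (s0 (sw u))" by (cases u) (simp add: algebra_simps phi_sq)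
  moreover have "fy (s0 (sw u)) \<in> Sstar" using m2 by (intro fy_Sstar M_sw M.intros)
  ultimately show ?thesis by simp
next
  case (m3 u) then show ?thesis using M_Sstar by (cases u) (simp add: algebra_simps phi_sq)
qed



definition tov :: "rp \<Rightarrow> real^2" where "tov w = vector [fst w, snd w]"

lemma vec2: "(u::real^2) = tov (u$1, u$2)"
  unfolding tov_def by (simp add: vec_eq_iff forall_2)

lemma tov_eq: "tov w = tov v \<longleftrightarrow> w = v"
  unfolding tov_def by (cases w; cases v) (simp add: vec_eq_iff forall_2)

lemma tov_comp: "tov w $ 1 = fst w" "tov w $ 2 = snd w" unfolding tov_def by simp_all

lemma mv2: "(A::real^2^2) *v tov (x,y) = tov (A$1$1 * x + A$1$2 * y, A$2$1 * x + A$2$2 * y)"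
  unfolding tov_def by (simp add: vec_eq_iff forall_2 matrix_vector_mult_def sum_2)

lemma mm2: "(A::real^2^2) ** (B::real^2^2) = (vector [vector [A$1$1 * B$1$1 + A$1$2 * B$2$1, A$1$1 * B$1$2 + A$1$2 * B$2$2],
    vector [A$2$1 * B$1$1 + A$2$2 * B$2$1, A$2$1 * B$1$2 + A$2$2 * B$2$2]] :: real^2^2)"
  by (simp add: vec_eq_iff forall_2 matrix_matrix_mult_def sum_2)

lemma mat1_2: "(mat 1 :: real^2^2) = vector [vector [1, 0], vector [0, 1]]"
  by (simp add: vec_eq_iff forall_2 mat_def)

lemma inv_unique: "(A::real^2^2) ** B = mat 1 \<Longrightarrow> B ** A = mat 1 \<Longrightarrow> matrix_inv A = B"
proof -
  assume h1: "A ** B = mat 1" and h2: "B ** A = mat 1"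
  let ?X = "matrix_inv A"
  have "A ** ?X = mat 1 \<and> ?X ** A = mat 1"
    unfolding matrix_inv_def by (rule someI[of _ B]) (use h1 h2 in simp)
  then have "?X = ?X ** (A ** B)" "?X ** A = mat 1" using h1 by (simp_all add: matrix_mul_rid)
  then show ?thesis by (metis matrix_mul_assoc matrix_mul_lid)
qed

definition tau0 :: "real^2^2" where "tau0 = vector [vector [1, -phi], vector [0, 1]]"
definition tau1 :: "real^2^2" where "tau1 = vector [vector [phi, -phi], vector [-1, phi]]"
definition tau2 :: "real^2^2" where "tau2 = vector [vector [phi, -1], vector [-phi, phi]]"
definition tau3 :: "real^2^2" where "tau3 = vector [vector [1, 0], vector [-phi, 1]]"

lemma psq: "phi * phi - phi = 1" using phi_sq by simp

lemma inv0: "matrix_inv sigma0 = tau0"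
  by (rule inv_unique) (simp_all add: mm2 mat1_2 sigma0_def tau0_def)
lemma inv1: "matrix_inv sigma1 = tau1"
  by (rule inv_unique) (simp_all add: mm2 mat1_2 sigma1_def tau1_def psq)
lemma inv2: "matrix_inv sigma2 = tau2"
  by (rule inv_unique) (simp_all add: mm2 mat1_2 sigma2_def tau2_def psq)
lemma inv3: "matrix_inv sigma3 = tau3"
  by (rule inv_unique) (simp_all add: mm2 mat1_2 sigma3_def tau3_def)



lemma act_s0: "sigma0 *v tov w = tov (s0 w)" by (cases w) (simp add: mv2 sigma0_def algebra_simps)
lemma act_s1: "sigma1 *v tov w = tov (s1 w)" by (cases w) (simp add: mv2 sigma1_def algebra_simps)
lemma act_s2: "sigma2 *v tov w = tov (s2 w)" by (cases w) (simp add: mv2 sigma2_def algebra_simps)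
lemma act_s3: "sigma3 *v tov w = tov (s3 w)" by (cases w) (simp add: mv2 sigma3_def algebra_simps)
lemma act_i0: "matrix_inv sigma0 *v tov w = tov (i0 w)" by (cases w) (simp add: inv0 mv2 tau0_def algebra_simps)
lemma act_i1: "matrix_inv sigma1 *v tov w = tov (i1 w)" by (cases w) (simp add: inv1 mv2 tau1_def algebra_simps)
lemma act_i2: "matrix_inv sigma2 *v tov w = tov (i2 w)" by (cases w) (simp add: inv2 mv2 tau2_def algebra_simps)
lemma act_i3: "matrix_inv sigma3 *v tov w = tov (i3 w)" by (cases w) (simp add: inv3 mv2 tau3_def algebra_simps)

lemma S_gen: assumes "g \<in> gens" "v \<in> S" shows "g *v v \<in> S" "matrix_inv g *v v \<in> S"
proof -
  obtain h where h: "h \<in> Gamma" "v = h *v vector [1,0]" using assms(2) unfolding S_def by auto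
  have "g *v v = (g ** h) *v vector [1,0]" using h by (simp add: matrix_vector_mul_assoc)
  moreover have "g ** h \<in> Gamma" using assms(1) h(1) by (rule Gamma.mul)
  ultimately show "g *v v \<in> S" unfolding S_def by auto
  have "matrix_inv g *v v = (matrix_inv g ** h) *v vector [1,0]" using h by (simp add: matrix_vector_mul_assoc)
  moreover have "matrix_inv g ** h \<in> Gamma" using assms(1) h(1) by (rule Gamma.mul_inv)
  ultimately show "matrix_inv g *v v \<in> S" unfolding S_def by auto
qed

lemma S_act: assumes "\<gamma> \<in> Gamma" shows "\<And>u. u \<in> S \<Longrightarrow> \<gamma> *v u \<in> S"
  using assms
proof (induction rule: Gamma.induct)
  case id then show ?case by simp
next
  case (mul g h) then show ?case by (simp add: S_gen(1) flip: matrix_vector_mul_assoc)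
next
  case (mul_inv g h) then show ?case by (simp add: S_gen(2) flip: matrix_vector_mul_assoc)
qed

lemma gens_cases: "g \<in> gens \<Longrightarrow> g = sigma0 \<or> g = sigma1 \<or> g = sigma2 \<or> g = sigma3"
  unfolding gens_def by auto

lemma e1_S: "tov (1,0) \<in> S"
  unfolding S_def tov_def using Gamma.id by force

lemma S_s: assumes "tov w \<in> S"
  shows "tov (s0 w) \<in> S" "tov (s1 w) \<in> S" "tov (s2 w) \<in> S" "tov (s3 w) \<in> S"
        "tov (i0 w) \<in> S" "tov (i1 w) \<in> S" "tov (i2 w) \<in> S" "tov (i3 w) \<in> S"
  using S_gen[OF _ assms] unfolding gens_def
  by (simp_all flip: act_s0 act_s1 act_s2 act_s3 act_i0 act_i1 act_i2 act_i3)

lemma e2_S: "tov (0,1) \<in> S"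
proof -
  have "tov (i0 (s1 (1,0))) \<in> S" using S_s e1_S by blast
  then show ?thesis by simp
qed

lemma M_S: "w \<in> M \<Longrightarrow> tov w \<in> S"
  by (induction rule: M.induct) (use e1_S e2_S S_s in auto)



fun ng :: "rp \<Rightarrow> rp" where "ng (x,y) = (-x,-y)"

lemma Sstar_cases: assumes "u \<in> Sstar" shows "\<exists>w\<in>M. u = w \<or> u = fx w \<or> u = fy w \<or> u = ng w"
proof -
  obtain a b x y where h: "u = (a*x, b*y)" "(x,y) \<in> M" "a = 1 \<or> a = -1" "b = 1 \<or> b = -1"
    using assms unfolding Sstar_def by auto
  then show ?thesis by (intro bexI[of _ "(x,y)"]) auto
qed

lemma Sstar_I: "(x,y) \<in> M \<Longrightarrow> (a = 1 \<or> a = -1) \<Longrightarrow> (b = 1 \<or> b = -1) \<Longrightarrow> (a*x, b*y) \<in> Sstar"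
  unfolding Sstar_def by blast

lemma Sstar_flip: assumes "u \<in> Sstar" shows "fx u \<in> Sstar" "fy u \<in> Sstar" "ng u \<in> Sstar"
proof -
  obtain a b x y where h: "u = (a*x, b*y)" "(x,y) \<in> M" "a = 1 \<or> a = -1" "b = 1 \<or> b = -1"
    using assms unfolding Sstar_def by auto
  have A: "fx u = ((-a)*x, b*y)" "fy u = (a*x, (-b)*y)" "ng u = ((-a)*x, (-b)*y)" using h(1) by simp_all
  show "fx u \<in> Sstar" unfolding A by (rule Sstar_I[OF h(2)]) (use h(3,4) in auto)
  show "fy u \<in> Sstar" unfolding A by (rule Sstar_I[OF h(2)]) (use h(3,4) in auto)
  show "ng u \<in> Sstar" unfolding A by (rule Sstar_I[OF h(2)]) (use h(3,4) in auto)
qed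
lemmas Sstar_fx = Sstar_flip(1) and Sstar_fy = Sstar_flip(2) and Sstar_ng = Sstar_flip(3)

lemma ng_Sstar: "w \<in> M \<Longrightarrow> ng w \<in> Sstar" using Sstar_ng M_Sstar by blast

lemma comm:
  "s0 (fx w) = fx (i0 w)" "s1 (fx w) = fx (i1 w)" "s2 (fx w) = fx (i2 w)" "s3 (fx w) = fx (i3 w)"
  "s0 (fy w) = fy (i0 w)" "s1 (fy w) = fy (i1 w)" "s2 (fy w) = fy (i2 w)" "s3 (fy w) = fy (i3 w)"
  "i0 (fx w) = fx (s0 w)" "i1 (fx w) = fx (s1 w)" "i2 (fx w) = fx (s2 w)" "i3 (fx w) = fx (s3 w)"
  "i0 (fy w) = fy (s0 w)" "i1 (fy w) = fy (s1 w)" "i2 (fy w) = fy (s2 w)" "i3 (fy w) = fy (s3 w)"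
  "s0 (ng w) = ng (s0 w)" "s1 (ng w) = ng (s1 w)" "s2 (ng w) = ng (s2 w)" "s3 (ng w) = ng (s3 w)"
  "i0 (ng w) = ng (i0 w)" "i1 (ng w) = ng (i1 w)" "i2 (ng w) = ng (i2 w)" "i3 (ng w) = ng (i3 w)"
  by (cases w; simp add: algebra_simps)+

lemma closed_gen: assumes "\<And>w. f (fx w) = fx (g w)" "\<And>w. f (fy w) = fy (g w)" "\<And>w. f (ng w) = ng (f w)"
  "f w \<in> Sstar" "g w \<in> Sstar" "u = w \<or> u = fx w \<or> u = fy w \<or> u = ng w" shows "f u \<in> Sstar"
  using assms(6)
proof (elim disjE)
  assume "u = w" then show ?thesis using assms(4) by simp
next
  assume "u = fx w" then show ?thesis using assms(1,5) Sstar_fx by simp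
next
  assume "u = fy w" then show ?thesis using assms(2,5) Sstar_fy by simp
next
  assume "u = ng w" then show ?thesis using assms(3,4) Sstar_ng by simp
qed

lemma Sstar_closed: assumes "u \<in> Sstar"
  shows "s0 u \<in> Sstar" "s1 u \<in> Sstar" "s2 u \<in> Sstar" "s3 u \<in> Sstar"
        "i0 u \<in> Sstar" "i1 u \<in> Sstar" "i2 u \<in> Sstar" "i3 u \<in> Sstar"
proof -
  obtain w where w: "w \<in> M" "u = w \<or> u = fx w \<or> u = fy w \<or> u = ng w" using Sstar_cases[OF assms] by blast
  have sM: "s0 w \<in> Sstar" "s1 w \<in> Sstar" "s2 w \<in> Sstar" "s3 w \<in> Sstar"
    using w(1) by (auto intro: M_Sstar M.intros)
  have iM: "i0 w \<in> Sstar" "i1 w \<in> Sstar" "i2 w \<in> Sstar" "i3 w \<in> Sstar"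
    using w(1) i0_M i1_M i2_M i3_M by auto
  show "s0 u \<in> Sstar" by (rule closed_gen[of s0 i0, OF comm(1) comm(5) comm(17) sM(1) iM(1) w(2)])
  show "s1 u \<in> Sstar" by (rule closed_gen[of s1 i1, OF comm(2) comm(6) comm(18) sM(2) iM(2) w(2)])
  show "s2 u \<in> Sstar" by (rule closed_gen[of s2 i2, OF comm(3) comm(7) comm(19) sM(3) iM(3) w(2)])
  show "s3 u \<in> Sstar" by (rule closed_gen[of s3 i3, OF comm(4) comm(8) comm(20) sM(4) iM(4) w(2)])
  show "i0 u \<in> Sstar" by (rule closed_gen[of i0 s0, OF comm(9) comm(13) comm(21) iM(1) sM(1) w(2)])
  show "i1 u \<in> Sstar" by (rule closed_gen[of i1 s1, OF comm(10) comm(14) comm(22) iM(2) sM(2) w(2)])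
  show "i2 u \<in> Sstar" by (rule closed_gen[of i2 s2, OF comm(11) comm(15) comm(23) iM(3) sM(3) w(2)])
  show "i3 u \<in> Sstar" by (rule closed_gen[of i3 s3, OF comm(12) comm(16) comm(24) iM(4) sM(4) w(2)])
qed

lemma pr_tov: "tov (u $ 1, u $ 2) = u" using vec2 by simp

lemma S_Sstar: assumes "\<gamma> \<in> Gamma" shows "\<exists>w\<in>Sstar. \<gamma> *v tov (1,0) = tov w"
  using assms
proof (induction rule: Gamma.induct)
  case id then show ?case using M_Sstar M.e1 by auto
next
  case (mul g h)
  then obtain w where w: "w \<in> Sstar" "h *v tov (1,0) = tov w" by blast
  have "(g ** h) *v tov (1,0) = g *v tov w" using w by (simp flip: matrix_vector_mul_assoc)
  then show ?case using gens_cases[OF mul(1)] Sstar_closed[OF w(1)]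
    by (auto simp: act_s0 act_s1 act_s2 act_s3)
next
  case (mul_inv g h)
  then obtain w where w: "w \<in> Sstar" "h *v tov (1,0) = tov w" by blast
  have "(matrix_inv g ** h) *v tov (1,0) = matrix_inv g *v tov w" using w by (simp flip: matrix_vector_mul_assoc)
  then show ?case using gens_cases[OF mul_inv(1)] Sstar_closed[OF w(1)]
    by (auto simp: act_i0 act_i1 act_i2 act_i3)
qed

lemma S_in_Sstar: "u \<in> S \<Longrightarrow> (u $ 1, u $ 2) \<in> Sstar"
proof -
  assume "u \<in> S"
  then obtain \<gamma> where g: "\<gamma> \<in> Gamma" "u = \<gamma> *v vector [1,0]" unfolding S_def by auto
  have "vector [1,0] = tov (1,0)" unfolding tov_def by simp
  then obtain w where "w \<in> Sstar" "u = tov w" using S_Sstar[OF g(1)] g(2) by auto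
  then show ?thesis by (cases w) (simp add: tov_comp)
qed

lemma axis_unique: assumes "(c, 0) \<in> Sstar" "c > 0" shows "c = 1"
proof -
  obtain a b x y where h: "(c,0) = (a*x, b*y)" "(x,y) \<in> M" "a = 1 \<or> a = -1" "b = 1 \<or> b = -1"
    using assms(1) unfolding Sstar_def by auto
  have p: "x \<ge> 0" "y = 0 \<longrightarrow> x = 1" using M_props[OF h(2)] by auto
  have "y = 0" using h(1) h(4) by auto
  then have "x = 1" using p by simp
  then show ?thesis using h(1) h(3) assms(2) by auto
qed



lemma abs_psi: "\<bar>psi\<bar> = phi - 1" using psi_eq phi_gt1 by simp

lemma step_ineq1:
  fixes a b A B :: real
  assumes "b > 0" "B \<noteq> 0" "a - phi * b \<ge> 0"
  shows "\<bar>(a - phi*b) * B\<bar> + \<bar>(A - psi*B) * b\<bar> < \<bar>a * B\<bar> + \<bar>A * b\<bar>"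
proof -
  define X Y where "X = \<bar>B\<bar>" and "Y = \<bar>A\<bar>"
  have X: "X > 0" using assms(2) X_def by simp
  have h1: "\<bar>(a - phi*b) * B\<bar> = (a - phi*b) * X" using assms(3) X_def by (simp add: abs_mult)
  have "\<bar>A - psi*B\<bar> \<le> Y + (phi - 1) * X"
    using abs_triangle_ineq4[of A "psi*B"] abs_psi X_def Y_def by (simp add: abs_mult)
  then have h2: "\<bar>(A - psi*B) * b\<bar> \<le> (Y + (phi - 1) * X) * b"
    using assms(1) by (simp add: abs_mult mult_right_mono)
  have h3: "\<bar>a * B\<bar> + \<bar>A * b\<bar> = a * X + Y * b"
  proof -
    have "a \<ge> 0" using assms(1,3) phi_gt1 by (smt (verit) mult_pos_pos)
    then show ?thesis using assms(1) X_def Y_def by (simp add: abs_mult)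
  qed
  have e: "(a - phi*b) * X + (Y + (phi - 1) * X) * b = a * X + Y * b - b * X" by (simp add: algebra_simps)
  have "b * X > 0" using assms(1) X by simp
  then show ?thesis using h1 h2 h3 e by linarith
qed

lemma step_ineq2:
  fixes a b A B :: real
  assumes "b > 0" "a > 0" "B \<noteq> 0" "a - b \<ge> 0" "phi * b - a > 0"
  shows "\<bar>phi*(a - b) * (psi*B - A)\<bar> + \<bar>psi*(A - B) * (phi*b - a)\<bar> < \<bar>a * B\<bar> + \<bar>A * b\<bar>"
proof -
  define X Y where "X = \<bar>B\<bar>" and "Y = \<bar>A\<bar>"
  have X: "X > 0" using assms(3) X_def by simp
  have Y: "Y \<ge> 0" using Y_def by simp
  have pp: "phi > 0" using phi_gt1 by simp
  have "\<bar>psi*B - A\<bar> \<le> (phi - 1) * X + Y"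
    using abs_triangle_ineq4[of "psi*B" A] abs_psi X_def Y_def by (simp add: abs_mult)
  then have h1: "\<bar>phi*(a - b) * (psi*B - A)\<bar> \<le> phi*(a - b) * ((phi - 1) * X + Y)"
    using assms(4) pp by (simp add: abs_mult mult_left_mono)
  have "\<bar>A - B\<bar> \<le> Y + X" using abs_triangle_ineq4[of A B] X_def Y_def by simp
  then have h2: "\<bar>psi*(A - B) * (phi*b - a)\<bar> \<le> (phi - 1) * (Y + X) * (phi*b - a)"
    using assms(5) abs_psi phi_gt1 by (simp add: abs_mult mult_left_mono mult_right_mono)
  have h3: "\<bar>a * B\<bar> + \<bar>A * b\<bar> = a * X + b * Y"
    using assms(1,2) X_def Y_def by (simp add: abs_mult)
  have e: "phi*(a - b) * ((phi - 1) * X + Y) + (phi - 1) * (Y + X) * (phi*b - a)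
     = a * X + b * Y - ((phi - 1) * a * X + Y * (phi*b - a))"
    using phi_sq by algebra
  have "(phi - 1) * a * X > 0" using phi_gt1 assms(2) X by simp
  moreover have "Y * (phi*b - a) \<ge> 0" using Y assms(5) by simp
  ultimately show ?thesis using h1 h2 h3 e by linarith
qed

lemma step:
  assumes "vl p > 0" "vl q > 0" "vl q \<le> vl p"
  shows "\<exists>p2 q2. vl p2 \<ge> 0 \<and> vl q2 \<ge> 0 \<and> (vl p2 \<noteq> 0 \<or> vl q2 \<noteq> 0) \<and> Hf p2 q2 < Hf p q \<and>
     ((vl p, vl q) = s0 (vl p2, vl q2) \<or> (vl p, vl q) = s1 (vl p2, vl q2))"
proof -
  define a b A B where "a = vl p" and "b = vl q" and "A = cv p" and "B = cv q"
  have B: "B \<noteq> 0" using cv_nz assms(2) B_def by auto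
  show ?thesis
  proof (cases "phi * b \<le> a")
    case True
    define p2 q2 where "p2 = zsub p (zphi q)" and "q2 = q"
    have v: "vl p2 = a - phi * b" "vl q2 = b" "cv p2 = A - psi * B" "cv q2 = B"
      unfolding p2_def q2_def a_def b_def A_def B_def by (simp_all add: vl_zsub cv_zsub vl_zphi cv_zphi)
    have "Hf p2 q2 < Hf p q"
      unfolding Hf_def v using step_ineq1[of b B a A] True assms B a_def b_def A_def B_def
      by (simp add: mult.commute)
    moreover have "(vl p, vl q) = s0 (vl p2, vl q2)" using v a_def b_def by simp
    ultimately show ?thesis using v True assms b_def by (intro exI[of _ p2] exI[of _ q2]) auto
  next
    case False
    define p2 q2 where "p2 = zphi (zsub p q)" and "q2 = zsub (zphi q) p"
    have v: "vl p2 = phi * (a - b)" "vl q2 = phi * b - a" "cv p2 = psi * (A - B)" "cv q2 = psi * B - A"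
      unfolding p2_def q2_def a_def b_def A_def B_def by (simp_all add: vl_zsub cv_zsub vl_zphi cv_zphi)
    have "Hf p2 q2 < Hf p q"
      unfolding Hf_def v using step_ineq2[of b a B A] False assms B a_def b_def A_def B_def
      by (simp add: mult.commute mult.left_commute)
    moreover have "(vl p, vl q) = s1 (vl p2, vl q2)"
    proof -
      have "phi * (phi * (a - b)) + phi * (phi * b - a) = a" "phi * (a - b) + phi * (phi * b - a) = b"
        using phi_sq by algebra+
      then show ?thesis using v a_def b_def by simp
    qed
    moreover have "vl p2 \<ge> 0" "vl q2 > 0" using v False assms a_def b_def phi_gt1 by auto
    ultimately show ?thesis by (intro exI[of _ p2] exI[of _ q2]) auto
  qed
qed



lemma sc_lin: "s0 (sc l w) = sc l (s0 w)" "s1 (sc l w) = sc l (s1 w)" "sw (sc l w) = sc l (sw w)"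
  by (cases w; simp add: algebra_simps)+

lemma exist_aux: "\<forall>p q. mu p q = k \<longrightarrow> vl p \<ge> 0 \<longrightarrow> vl q \<ge> 0 \<longrightarrow> (vl p \<noteq> 0 \<or> vl q \<noteq> 0) \<longrightarrow>
   (\<exists>l>0. \<exists>w\<in>M. (vl p, vl q) = sc l w)"
proof (induction k rule: less_induct)
  case (less k)
  show ?case
  proof (intro allI impI)
    fix p q assume k: "mu p q = k" and a: "vl p \<ge> 0" and b: "vl q \<ge> 0" and nz: "vl p \<noteq> 0 \<or> vl q \<noteq> 0"
    show "\<exists>l>0. \<exists>w\<in>M. (vl p, vl q) = sc l w"
    proof (cases "vl q = 0")
      case True
      then have "vl p > 0" using a nz by auto
      then show ?thesis using True M.e1 by (intro exI[of _ "vl p"]) force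
    next
      case qnz: False
      show ?thesis
      proof (cases "vl p = 0")
        case True
        then have "vl q > 0" using b qnz by auto
        then show ?thesis using True M.e2 by (intro exI[of _ "vl q"]) force
      next
        case pnz: False
        have ap: "vl p > 0" "vl q > 0" using a b pnz qnz by auto
        show ?thesis
        proof (cases "vl q \<le> vl p")
          case True
          obtain p2 q2 where s: "vl p2 \<ge> 0" "vl q2 \<ge> 0" "vl p2 \<noteq> 0 \<or> vl q2 \<noteq> 0" "Hf p2 q2 < Hf p q"
            "(vl p, vl q) = s0 (vl p2, vl q2) \<or> (vl p, vl q) = s1 (vl p2, vl q2)"
            using step[OF ap True] by blast
          have "mu p2 q2 < k" using mu_less[OF s(4)] k by simp
          then obtain l w where lw: "l > 0" "w \<in> M" "(vl p2, vl q2) = sc l w" using less.IH s(1-3) by blast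
          show ?thesis
          proof (cases "(vl p, vl q) = s0 (vl p2, vl q2)")
            case True
            then have "(vl p, vl q) = sc l (s0 w)" using lw(3) sc_lin by simp
            then show ?thesis using lw M.m0 by blast
          next
            case False
            then have "(vl p, vl q) = sc l (s1 w)" using s(5) lw(3) sc_lin by simp
            then show ?thesis using lw M.m1 by blast
          qed
        next
          case False
          obtain p2 q2 where s: "vl p2 \<ge> 0" "vl q2 \<ge> 0" "vl p2 \<noteq> 0 \<or> vl q2 \<noteq> 0" "Hf p2 q2 < Hf q p"
            "(vl q, vl p) = s0 (vl p2, vl q2) \<or> (vl q, vl p) = s1 (vl p2, vl q2)"
            using step[OF ap(2) ap(1)] False by auto
          have "mu p2 q2 < k" using mu_less[OF s(4)] k Hf_swap mu_def by simp
          then obtain l w where lw: "l > 0" "w \<in> M" "(vl p2, vl q2) = sc l w" using less.IH s(1-3) by blast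
          show ?thesis
          proof (cases "(vl q, vl p) = s0 (vl p2, vl q2)")
            case True
            then have "(vl q, vl p) = sc l (s0 w)" using lw(3) sc_lin by simp
            then have "(vl p, vl q) = sc l (sw (s0 w))" using sc_lin(3)[of l "s0 w"] by (metis sw.simps)
            then show ?thesis using lw M.m0 M_sw by blast
          next
            case False
            then have "(vl q, vl p) = sc l (s1 w)" using s(5) lw(3) sc_lin by simp
            then have "(vl p, vl q) = sc l (sw (s1 w))" using sc_lin(3)[of l "s1 w"] by (metis sw.simps)
            then show ?thesis using lw M.m1 M_sw by blast
          qed
        qed
      qed
    qed
  qed
qed

lemma exist: "vl p \<ge> 0 \<Longrightarrow> vl q \<ge> 0 \<Longrightarrow> (vl p \<noteq> 0 \<or> vl q \<noteq> 0) \<Longrightarrow> \<exists>l>0. \<exists>w\<in>M. (vl p, vl q) = sc l w"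
  using exist_aux by blast



fun zadd :: "zp \<Rightarrow> zp \<Rightarrow> zp" where "zadd (a,b) (c,d) = (a + c, b + d)"
lemma vl_zadd: "vl (zadd p q) = vl p + vl q" by (cases p; cases q) (simp add: algebra_simps)

definition Zp :: "real \<Rightarrow> bool" where "Zp r \<longleftrightarrow> (\<exists>p. r = vl p)"

lemma Zp_add: "Zp x \<Longrightarrow> Zp y \<Longrightarrow> Zp (x + y)" unfolding Zp_def by (metis vl_zadd)
lemma Zp_sub: "Zp x \<Longrightarrow> Zp y \<Longrightarrow> Zp (x - y)" unfolding Zp_def by (metis vl_zsub)
lemma Zp_neg: "Zp x \<Longrightarrow> Zp (- x)" unfolding Zp_def by (metis vl_zneg)
lemma Zp_phi: "Zp x \<Longrightarrow> Zp (phi * x)" unfolding Zp_def by (metis vl_zphi)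
lemma Zp_0: "Zp 0" unfolding Zp_def by (rule exI[of _ "(0,0)"]) simp
lemma Zp_1: "Zp 1" unfolding Zp_def by (rule exI[of _ "(1,0)"]) simp
lemma Zp_abs: "Zp x \<Longrightarrow> Zp \<bar>x\<bar>" by (cases "x \<ge> 0") (auto intro: Zp_neg)

lemma M_Zp: "w \<in> M \<Longrightarrow> Zp (fst w) \<and> Zp (snd w)"
proof (induction rule: M.induct)
  case e1 then show ?case using Zp_0 Zp_1 by simp
next
  case e2 then show ?case using Zp_0 Zp_1 by simp
next
  case (m0 w)
  obtain x y where w: "w = (x,y)" by (cases w)
  have "Zp x" "Zp y" using m0 w by auto
  then have "Zp (x + phi*y)" by (intro Zp_add Zp_phi)
  then show ?case using w \<open>Zp y\<close> by (simp only: s0.simps fst_conv snd_conv; blast)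
next
  case (m1 w)
  obtain x y where w: "w = (x,y)" by (cases w)
  have "Zp x" "Zp y" using m1 w by auto
  then have "Zp (phi*x + phi*y)" "Zp (x + phi*y)" by (blast intro: Zp_add Zp_phi)+
  then show ?case using w by (simp only: s1.simps fst_conv snd_conv; blast)
next
  case (m2 w)
  obtain x y where w: "w = (x,y)" by (cases w)
  have "Zp x" "Zp y" using m2 w by auto
  then have "Zp (phi*x + y)" "Zp (phi*x + phi*y)" by (blast intro: Zp_add Zp_phi)+
  then show ?case using w by (simp only: s2.simps fst_conv snd_conv; blast)
next
  case (m3 w)
  obtain x y where w: "w = (x,y)" by (cases w)
  have "Zp x" "Zp y" using m3 w by auto
  then have "Zp (phi*x + y)" by (intro Zp_add Zp_phi)
  then show ?case using w \<open>Zp x\<close> by (simp only: s3.simps fst_conv snd_conv; blast)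
qed

lemma Sstar_Zp: "u \<in> Sstar \<Longrightarrow> Zp (fst u) \<and> Zp (snd u)"
  unfolding Sstar_def using M_Zp by (force intro: Zp_neg)

lemma S_Zp: "u \<in> S \<Longrightarrow> Zp (u$1) \<and> Zp (u$2)"
  using S_in_Sstar Sstar_Zp by fastforce

lemma tinv: "sigma0 ** tau0 = mat 1" "tau0 ** sigma0 = mat 1" "sigma1 ** tau1 = mat 1" "tau1 ** sigma1 = mat 1"
  "sigma2 ** tau2 = mat 1" "tau2 ** sigma2 = mat 1" "sigma3 ** tau3 = mat 1" "tau3 ** sigma3 = mat 1"
  by (simp_all add: mm2 mat1_2 sigma0_def tau0_def sigma1_def tau1_def sigma2_def tau2_def sigma3_def tau3_def psq)

lemma invg: assumes "g \<in> gens" shows "g ** matrix_inv g = mat 1 \<and> matrix_inv g ** g = mat 1"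
  using gens_cases[OF assms] by (elim disjE; simp add: inv0 inv1 inv2 inv3 tinv)

lemma Gamma_inv: assumes "\<gamma> \<in> Gamma" shows "\<exists>\<gamma>'. (\<forall>u\<in>S. \<gamma>' *v u \<in> S) \<and> \<gamma>' ** \<gamma> = mat 1"
  using assms
proof (induction rule: Gamma.induct)
  case id then show ?case by (intro exI[of _ "mat 1"]) simp
next
  case (mul g h)
  then obtain h' where h': "\<forall>u\<in>S. h' *v u \<in> S" "h' ** h = mat 1" by blast
  have "(h' ** matrix_inv g) ** (g ** h) = h' ** ((matrix_inv g ** g) ** h)" by (simp add: matrix_mul_assoc)
  also have "\<dots> = mat 1" using invg[OF mul(1)] h'(2) by simp
  finally have "(h' ** matrix_inv g) ** (g ** h) = mat 1" .
  moreover have "\<forall>u\<in>S. (h' ** matrix_inv g) *v u \<in> S"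
    using h'(1) S_gen(2)[OF mul(1)] by (simp flip: matrix_vector_mul_assoc)
  ultimately show ?case by blast
next
  case (mul_inv g h)
  then obtain h' where h': "\<forall>u\<in>S. h' *v u \<in> S" "h' ** h = mat 1" by blast
  have "(h' ** g) ** (matrix_inv g ** h) = h' ** ((g ** matrix_inv g) ** h)" by (simp add: matrix_mul_assoc)
  also have "\<dots> = mat 1" using invg[OF mul_inv(1)] h'(2) by simp
  finally have "(h' ** g) ** (matrix_inv g ** h) = mat 1" .
  moreover have "\<forall>u\<in>S. (h' ** g) *v u \<in> S"
    using h'(1) S_gen(1)[OF mul_inv(1)] by (simp flip: matrix_vector_mul_assoc)
  ultimately show ?case by blast
qed

lemma S_fy_aux: assumes "\<gamma> \<in> Gamma" shows "\<And>w. \<gamma> *v tov (1,0) = tov w \<Longrightarrow> tov (fy w) \<in> S"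
  using assms
proof (induction rule: Gamma.induct)
  case id then show ?case using e1_S tov_eq by (metis fy.simps matrix_vector_mul_lid minus_zero)
next
  case (mul g h w)
  obtain v where v: "h *v tov (1,0) = tov v" using vec2 by metis
  have fv: "tov (fy v) \<in> S" using mul.IH v by blast
  have "tov w = g *v tov v" using mul.prems v by (simp flip: matrix_vector_mul_assoc)
  then have "w = s0 v \<or> w = s1 v \<or> w = s2 v \<or> w = s3 v"
    using gens_cases[OF mul(1)] by (auto simp: act_s0 act_s1 act_s2 act_s3 tov_eq)
  then show ?case using S_s[OF fv] comm by auto
next
  case (mul_inv g h w)
  obtain v where v: "h *v tov (1,0) = tov v" using vec2 by metis
  have fv: "tov (fy v) \<in> S" using mul_inv.IH v by blast
  have "tov w = matrix_inv g *v tov v" using mul_inv.prems v by (simp flip: matrix_vector_mul_assoc)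
  then have "w = i0 v \<or> w = i1 v \<or> w = i2 v \<or> w = i3 v"
    using gens_cases[OF mul_inv(1)] by (auto simp: act_i0 act_i1 act_i2 act_i3 tov_eq)
  then show ?case using S_s[OF fv] comm by auto
qed

lemma S_fy: "tov w \<in> S \<Longrightarrow> tov (fy w) \<in> S"
proof -
  assume "tov w \<in> S"
  then obtain \<gamma> where "\<gamma> \<in> Gamma" "tov w = \<gamma> *v vector [1,0]" unfolding S_def by auto
  moreover have "vector [1,0] = tov (1,0)" unfolding tov_def by simp
  ultimately show ?thesis using S_fy_aux by metis
qed

lemma S_ng: "tov w \<in> S \<Longrightarrow> tov (ng w) \<in> S"
proof -
  assume "tov w \<in> S"
  then obtain \<gamma> where g: "\<gamma> \<in> Gamma" "tov w = \<gamma> *v vector [1,0]" unfolding S_def by auto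
  have e: "vector [1,0] = tov (1,0)" unfolding tov_def by simp
  have m: "tov (-1,0) \<in> S"
  proof -
    have "tov (s1 (i0 (0,1))) \<in> S" using S_s e2_S by blast
    moreover have "s1 (i0 (0,1)) = (-1,0)" using phi_sq by simp
    ultimately show ?thesis by simp
  qed
  have "\<gamma> *v tov (-1,0) = tov (ng w)"
    using g(2) unfolding e by (cases w) (simp add: mv2 tov_eq)
  then show ?thesis using S_act[OF g(1) m] by simp
qed

lemma S_fx: "tov w \<in> S \<Longrightarrow> tov (fx w) \<in> S"
proof -
  assume "tov w \<in> S"
  then have "tov (ng (fy w)) \<in> S" using S_fy S_ng by blast
  moreover have "ng (fy w) = fx w" by (cases w) simp
  ultimately show ?thesis by simp
qed



lemma norm_tov: "norm (tov (a, 0)) = \<bar>a\<bar>"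
  unfolding norm_vec_def L2_set_def by (simp add: sum_2 tov_comp)

lemma e_tov: "(vector [1,0] :: real^2) = tov (1,0)" unfolding tov_def by simp

theorem lemma3p3:
  fixes v1 v2 :: "real^2"
  assumes "v1 \<in> S" and "v2 \<in> S" and "v1 \<noteq> v2"
  shows "\<exists>p\<in>S. \<exists>q\<in>S. p $ 2 = q $ 2 \<and>
           dist p q = gcd_Gamma_plus ((v1 - v2) $ 1) ((v1 - v2) $ 2)"
proof -
  define x y where "x = (v1 - v2) $ 1" and "y = (v1 - v2) $ 2"
  have Zxy: "Zp x" "Zp y" using S_Zp[OF assms(1)] S_Zp[OF assms(2)] unfolding x_def y_def
    by (auto intro: Zp_sub)
  obtain P Q where PQ: "vl P = \<bar>x\<bar>" "vl Q = \<bar>y\<bar>" using Zp_abs[OF Zxy(1)] Zp_abs[OF Zxy(2)]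
    unfolding Zp_def by metis
  have nz: "x \<noteq> 0 \<or> y \<noteq> 0"
  proof (rule ccontr)
    assume "\<not> (x \<noteq> 0 \<or> y \<noteq> 0)"
    then have "v1 - v2 = 0" unfolding x_def y_def by (simp add: vec_eq_iff forall_2)
    then show False using assms(3) by simp
  qed
  obtain l w where lw: "l > 0" "w \<in> M" "(\<bar>x\<bar>, \<bar>y\<bar>) = sc l w"
    using exist[of P Q] PQ nz by auto
  have wdef: "w = (\<bar>x\<bar> / l, \<bar>y\<bar> / l)" using lw(1,3) by (cases w) auto
  have tw: "tov w \<in> S" using M_S[OF lw(2)] .
  have gcd: "gcd_Gamma_plus x y = l"
    unfolding gcd_Gamma_plus_def
  proof (rule the_equality)
    have "vector [\<bar>x\<bar> / l, \<bar>y\<bar> / l] = tov w" unfolding wdef tov_def by simp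
    then show "l > 0 \<and> vector [\<bar>x\<bar> / l, \<bar>y\<bar> / l] \<in> S" using lw(1) tw by simp
  next
    fix l2 assume h: "l2 > 0 \<and> vector [\<bar>x\<bar> / l2, \<bar>y\<bar> / l2] \<in> S"
    obtain \<gamma> where g: "\<gamma> \<in> Gamma" "tov w = \<gamma> *v vector [1,0]" using tw unfolding S_def by auto
    obtain \<gamma>' where g': "\<forall>u\<in>S. \<gamma>' *v u \<in> S" "\<gamma>' ** \<gamma> = mat 1" using Gamma_inv[OF g(1)] by blast
    have "vector [\<bar>x\<bar> / l2, \<bar>y\<bar> / l2] = (l / l2) *\<^sub>R tov w"
      unfolding wdef tov_def using lw(1) h by (simp add: vec_eq_iff forall_2)
    then have "\<gamma>' *v vector [\<bar>x\<bar> / l2, \<bar>y\<bar> / l2] = (l / l2) *\<^sub>R ((\<gamma>' ** \<gamma>) *v vector [1,0])"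
      using g(2) by (simp add: matrix_vector_mult_scaleR matrix_vector_mul_assoc)
    also have "\<dots> = tov (l / l2, 0)" unfolding g'(2) tov_def by (simp add: vec_eq_iff forall_2)
    finally have "tov (l / l2, 0) \<in> S" using g'(1) h by metis
    then have "(l / l2, 0) \<in> Sstar" using S_in_Sstar[of "tov (l/l2, 0)"] by (simp add: tov_comp)
    moreover have "l / l2 > 0" using lw(1) h by simp
    ultimately have "l / l2 = 1" by (rule axis_unique)
    then show "l2 = l" using h by (simp add: field_simps)
  qed
  have txy: "tov (x / l, y / l) \<in> S"
  proof -
    have "(x / l, y / l) = w \<or> (x / l, y / l) = fx w \<or> (x / l, y / l) = fy w \<or> (x / l, y / l) = ng w"
      unfolding wdef by (cases "x \<ge> 0"; cases "y \<ge> 0") auto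
    moreover have "tov (fx w) \<in> S" "tov (fy w) \<in> S" "tov (ng w) \<in> S"
      using S_fx[OF tw] S_fy[OF tw] S_ng[OF tw] by simp_all
    ultimately show ?thesis using tw by (elim disjE) (simp_all only:)
  qed
  obtain h where h: "h \<in> Gamma" "tov (x / l, y / l) = h *v vector [1,0]" using txy unfolding S_def by auto
  obtain h' where h': "\<forall>u\<in>S. h' *v u \<in> S" "h' ** h = mat 1" using Gamma_inv[OF h(1)] by blast
  define p q where "p = h' *v v1" and "q = h' *v v2"
  have pq: "p \<in> S" "q \<in> S" using h'(1) assms(1,2) unfolding p_def q_def by auto
  have "v1 - v2 = l *\<^sub>R tov (x / l, y / l)"
    unfolding tov_def x_def y_def using lw(1) by (simp add: vec_eq_iff forall_2)
  then have "p - q = l *\<^sub>R ((h' ** h) *v vector [1,0])"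
    unfolding p_def q_def using h(2)
    by (simp add: matrix_vector_mult_diff_distrib[symmetric] matrix_vector_mult_scaleR matrix_vector_mul_assoc)
  also have "\<dots> = tov (l, 0)" unfolding h'(2) tov_def by (simp add: vec_eq_iff forall_2)
  finally have d: "p - q = tov (l, 0)" .
  have "p $ 2 = q $ 2" using arg_cong[OF d, of "\<lambda>v. v $ 2"] by (simp add: tov_comp)
  moreover have "dist p q = l" unfolding dist_norm d norm_tov using lw(1) by simp
  ultimately show ?thesis using pq gcd unfolding x_def y_def by auto
qed

end
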